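(* Consider the private information delivery (PID) problem with $K\ge 2$ messages, $N$ servers and $M=2$ messages stored per server. Then the capacity is $$C=\begin{cases} 2/K & \text{if } N\ge \lceil K/2\rceil+1,\\ 1/\lceil K/2\rceil & \text{if } N=\lceil K/2\rceil,\\ 0 & \text{if } N<\lceil K/2\rceil.\end{cases}$$
   Context: The PID problem with parameters $(K,N,M)$: There are $K$ independent messages $W_1,\dots,W_K$, each consisting of $L$ i.i.d. uniform symbols from a finite field $\mathbb{F}_p$, so that (in $p$-ary units) $H(W_k)=L$ for all $k$ and $H(W_1,\dots,W_K)=\sum_k H(W_k)$. There are $N$ servers; server $n$ stores $S_n=\{W_k : k\in\mathcal{S}_n\}$ for some $\mathcal{S}_n\subset\{1,\dots,K\}$ with $|\mathcal{S}_n|=M$ (a design choice). The servers share a common random variable $Z$ independent of the messages. For each $k\in\{1,\dots,K\}$, server $n$ sends an answer $A_n^{[k]}$ that is a deterministic function of $(S_n,Z)$ and consists of $D_n$ symbols of $\mathbb{F}_p$ ($D_n$ independent of $k$). Correctness: $H(W_k\mid A_1^{[k]},\dots,A_N^{[k]})=0$ for all $k$. Privacy: for all $k$, $(A_1^{[1]},\dots,A_N^{[1]},W_1)$ and $(A_1^{[k]},\dots,A_N^{[k]},W_k)$ are identically distributed. The rate is $R=L/\sum_n D_n$; a rate is achievable if some scheme (choice of $L$, $p$, storage sets, $Z$, answer functions) satisfying these constraints has rate at least $R$; the capacity $C$ is the supremum of achievable rates over all storage designs and schemes (taken to be $0$ if no scheme exists). *)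

theory Defs
  imports "HOL-Probability.Probability"
begin

text \<open>Message tuples: message k (for 1 \<le> k \<le> K) is a vector of L symbols of F_p,
  encoded as naturals below p; all other entries are 0 (extensional encoding).\<close>
definition pid_msgs :: "nat \<Rightarrow> nat \<Rightarrow> nat \<Rightarrow> (nat \<Rightarrow> nat \<Rightarrow> nat) set" where
  "pid_msgs K L p =
     {w. \<forall>k i. (if 1 \<le> k \<and> k \<le> K \<and> i < L then w k i < p else w k i = 0)}"

definition pid_answers ::
  "nat \<Rightarrow> (nat \<Rightarrow> nat \<Rightarrow> (nat \<Rightarrow> nat \<Rightarrow> nat) \<Rightarrow> nat \<Rightarrow> nat list)
     \<Rightarrow> nat \<Rightarrow> (nat \<Rightarrow> nat \<Rightarrow> nat) \<Rightarrow> nat \<Rightarrow> nat list list" where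
  "pid_answers N f k w z = map (\<lambda>n. f n k w z) [1..<N+1]"

text \<open>A PID scheme: field size p (prime), message length L, storage sets S,
  distribution Zd of the common randomness Z (independent of the messages),
  answer functions f n k (server n, demand k), answer lengths D n.\<close>
definition pid_scheme ::
  "nat \<Rightarrow> nat \<Rightarrow> nat \<Rightarrow> nat \<Rightarrow> nat \<Rightarrow> (nat \<Rightarrow> nat set) \<Rightarrow> nat pmf
     \<Rightarrow> (nat \<Rightarrow> nat \<Rightarrow> (nat \<Rightarrow> nat \<Rightarrow> nat) \<Rightarrow> nat \<Rightarrow> nat list) \<Rightarrow> (nat \<Rightarrow> nat) \<Rightarrow> bool" where
  "pid_scheme K N M p L S Zd f D \<longleftrightarrow>
     prime p \<and> L \<ge> 1 \<and>
     (\<forall>n\<in>{1..N}. S n \<subseteq> {1..K} \<and> card (S n) = M) \<and>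
     \<comment> \<open>answer of server n depends only on its stored messages and Z\<close>
     (\<forall>n\<in>{1..N}. \<forall>k\<in>{1..K}. \<forall>w\<in>pid_msgs K L p. \<forall>w'\<in>pid_msgs K L p. \<forall>z.
         (\<forall>j\<in>S n. w j = w' j) \<longrightarrow> f n k w z = f n k w' z) \<and>
     \<comment> \<open>answer of server n consists of D n symbols of F_p\<close>
     (\<forall>n\<in>{1..N}. \<forall>k\<in>{1..K}. \<forall>w\<in>pid_msgs K L p. \<forall>z\<in>set_pmf Zd.
         length (f n k w z) = D n \<and> set (f n k w z) \<subseteq> {..<p}) \<and>
     \<comment> \<open>correctness: H(W_k | A^[k]) = 0, i.e. W_k is a.s. a function of the answers\<close>
     (\<forall>k\<in>{1..K}. \<forall>w\<in>pid_msgs K L p. \<forall>w'\<in>pid_msgs K L p.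
         \<forall>z\<in>set_pmf Zd. \<forall>z'\<in>set_pmf Zd.
         pid_answers N f k w z = pid_answers N f k w' z' \<longrightarrow> w k = w' k) \<and>
     \<comment> \<open>privacy: (A^[k], W_k) has the same distribution as (A^[1], W_1)\<close>
     (\<forall>k\<in>{1..K}.
        map_pmf (\<lambda>(w, z). (pid_answers N f k w z, w k))
                (pair_pmf (pmf_of_set (pid_msgs K L p)) Zd)
      = map_pmf (\<lambda>(w, z). (pid_answers N f 1 w z, w 1))
                (pair_pmf (pmf_of_set (pid_msgs K L p)) Zd))"

definition pid_rates :: "nat \<Rightarrow> nat \<Rightarrow> nat \<Rightarrow> real set" where
  "pid_rates K N M =
     {real L / real (\<Sum>n\<in>{1..N}. D n) | p L S Zd f D. pid_scheme K N M p L S Zd f D}"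

definition pid_capacity :: "nat \<Rightarrow> nat \<Rightarrow> nat \<Rightarrow> real" where
  "pid_capacity K N M = (if pid_rates K N M = {} then 0 else Sup (pid_rates K N M))"

end

theory Submission
  imports Defs "HOL-Library.Nat_Bijection"
begin


definition Vs :: "nat \<Rightarrow> (nat \<Rightarrow> nat) set" where "Vs L = PiE_dflt {..<L} 0 (\<lambda>_. {..<2})"
definition ind :: "nat set \<Rightarrow> nat \<Rightarrow> nat" where "ind U j = (if j \<in> U then 1 else 0)"
definition del :: "(nat \<Rightarrow> nat set) \<Rightarrow> (nat \<Rightarrow> nat) \<Rightarrow> nat \<Rightarrow> nat" where
  "del U v j = (v 0 * ind (U 0) j + v 1 * ind (U 1) j) mod 2"
definition xadd :: "(nat \<Rightarrow> nat set) \<Rightarrow> (nat \<Rightarrow> nat) \<Rightarrow> (nat \<Rightarrow> nat) \<Rightarrow> nat \<Rightarrow> nat" where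
  "xadd U v z = (\<lambda>j. (z j + del U v j) mod 2)"
definition dec :: "(nat \<Rightarrow> nat set) \<Rightarrow> nat \<Rightarrow> (nat \<Rightarrow> nat) \<Rightarrow> nat \<Rightarrow> nat" where
  "dec X L a = (\<lambda>i. if i < L then (\<Sum>j\<in>X i. a j) mod 2 else 0)"
definition Zf :: "nat \<Rightarrow> (nat \<Rightarrow> nat set) \<Rightarrow> nat \<Rightarrow> (nat \<Rightarrow> nat) set" where
  "Zf m X L = {z \<in> Vs m. \<forall>i<L. (\<Sum>j\<in>X i. z j) mod 2 = 0}"
definition enc :: "nat \<Rightarrow> (nat \<Rightarrow> nat) \<Rightarrow> nat" where "enc m z = list_encode (map z [0..<m])"
definition zdec :: "nat \<Rightarrow> nat \<Rightarrow> nat" where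
  "zdec c j = (let l = list_decode c in if j < length l then l ! j else 0)"
definition slots :: "nat \<Rightarrow> (nat \<Rightarrow> nat) \<Rightarrow> nat \<Rightarrow> nat list" where
  "slots m sv n = filter (\<lambda>j. sv j = n) [0..<m]"

lemma Vs_iff: "v \<in> Vs L \<longleftrightarrow> (\<forall>i. if i < L then v i < 2 else v i = 0)"
  unfolding Vs_def PiE_dflt_def by auto

lemma finite_Vs: "finite (Vs L)" unfolding Vs_def by auto

lemma zero_Vs: "(\<lambda>_. 0) \<in> Vs L" unfolding Vs_iff by auto

lemma zdec_enc: "z \<in> Vs m \<Longrightarrow> zdec (enc m z) j = z j"
  unfolding zdec_def enc_def Vs_iff by (auto simp: Let_def)

lemma inj_enc: "inj_on (enc m) (Vs m)"
proof (rule inj_onI)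
  fix x y assume "x \<in> Vs m" "y \<in> Vs m" "enc m x = enc m y"
  then show "x = y" by (metis ext zdec_enc)
qed

lemma sum_ind: "finite X \<Longrightarrow> (\<Sum>j\<in>X. ind U j) = card (U \<inter> X)"
proof -
  assume f: "finite X"
  have "(\<Sum>j\<in>X. ind U j) = (\<Sum>j\<in>{j\<in>X. j \<in> U}. 1)"
    unfolding ind_def by (simp only: sum.inter_filter[OF f])
  also have "{j\<in>X. j \<in> U} = U \<inter> X" by auto
  finally show ?thesis by simp
qed

lemma lin:
  assumes L: "L = 1 \<or> L = 2" and v: "v \<in> Vs L" and i: "i < L" and fX: "finite (X i)"
    and par: "\<forall>i'<L. card (U i' \<inter> X i) mod 2 = (if i' = i then 1 else 0)"
  shows "(\<Sum>j\<in>X i. (z j + del U v j) mod 2) mod 2 = ((\<Sum>j\<in>X i. z j) + v i) mod 2"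
proof -
  have s1: "(\<Sum>j\<in>X i. (z j + del U v j) mod 2) mod 2 = ((\<Sum>j\<in>X i. z j) + (\<Sum>j\<in>X i. del U v j)) mod 2"
    by (simp add: mod_sum_eq sum.distrib)
  have s2: "(\<Sum>j\<in>X i. del U v j) mod 2 = (\<Sum>j\<in>X i. v 0 * ind (U 0) j + v 1 * ind (U 1) j) mod 2"
    unfolding del_def by (simp add: mod_sum_eq)
  have s3: "(\<Sum>j\<in>X i. v 0 * ind (U 0) j + v 1 * ind (U 1) j) = v 0 * card (U 0 \<inter> X i) + v 1 * card (U 1 \<inter> X i)"
    using fX by (simp add: sum.distrib sum_distrib_left[symmetric] sum_ind)
  have "(\<Sum>j\<in>X i. (z j + del U v j) mod 2) mod 2 = ((\<Sum>j\<in>X i. z j) + (v 0 * card (U 0 \<inter> X i) + v 1 * card (U 1 \<inter> X i)) mod 2) mod 2"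
    using s1 s2 s3 by (metis mod_add_right_eq)
  also have "(v 0 * card (U 0 \<inter> X i) + v 1 * card (U 1 \<inter> X i)) mod 2 = v i"
  proof -
    have v01: "v 0 < 2" "v 1 < 2" "L = 1 \<Longrightarrow> v 1 = 0" using v L unfolding Vs_iff by (metis less_2_cases_iff zero_less_one less_numeral_extra(4) less_one nat_neq_iff)+
    show ?thesis
    proof (cases "L = 1")
      case True
      then have "i = 0" using i by simp
      moreover have "card (U 0 \<inter> X 0) mod 2 = 1" using par True \<open>i = 0\<close> by auto
      ultimately show ?thesis using v01 True by (simp add: mod_mult_right_eq[symmetric])
    next
      case False
      then have L2: "L = 2" using L by simp
      have c0: "card (U 0 \<inter> X i) mod 2 = (if i = 0 then 1 else 0)" using par L2 by auto
      have c1: "card (U 1 \<inter> X i) mod 2 = (if i = 1 then 1 else 0)" using par L2 by auto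
      have "(v 0 * card (U 0 \<inter> X i) + v 1 * card (U 1 \<inter> X i)) mod 2
          = (v 0 * (card (U 0 \<inter> X i) mod 2) + v 1 * (card (U 1 \<inter> X i) mod 2)) mod 2"
        by (metis mod_add_eq mod_mult_right_eq)
      also have "\<dots> = v i"
      proof (cases "i = 0")
        case True then show ?thesis using c0 c1 v01 by auto
      next
        case False then have "i = 1" using i L2 by simp
        then show ?thesis using c0 c1 v01 by auto
      qed
      finally show ?thesis .
    qed
  qed
  finally show ?thesis by (simp add: mod_add_right_eq)
qed

lemma pair_pmf_of_set:
  assumes "finite A" "A \<noteq> {}" "finite B" "B \<noteq> {}"
  shows "pair_pmf (pmf_of_set A) (pmf_of_set B) = pmf_of_set (A \<times> B)"
  by (rule pmf_eqI) (auto simp: pmf_pair assms indicator_def card_cartesian_product)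

lemma msgs_PiE: "pid_msgs K L 2 = PiE_dflt {1..K} (\<lambda>_. 0) (\<lambda>_. Vs L)"
  unfolding pid_msgs_def PiE_dflt_def Vs_iff by (auto simp: fun_eq_iff)

lemma msgs_proj:
  assumes k: "k \<in> {1..K}"
  shows "map_pmf (\<lambda>w. w k) (pmf_of_set (pid_msgs K L 2)) = pmf_of_set (Vs L)"
proof -
  have ne: "Vs L \<noteq> {}" using zero_Vs by auto
  have "pmf_of_set (pid_msgs K L 2) = Pi_pmf {1..K} (\<lambda>_. 0) (\<lambda>_. pmf_of_set (Vs L))"
    unfolding msgs_PiE by (rule Pi_pmf_of_set[symmetric]) (auto simp: finite_Vs ne)
  then show ?thesis using k by (simp add: Pi_pmf_component)
qed

lemma finite_msgs: "finite (pid_msgs K L 2)" unfolding msgs_PiE by (auto simp: finite_Vs)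
lemma msgs_ne: "pid_msgs K L 2 \<noteq> {}" unfolding msgs_PiE using zero_Vs by auto

locale xs =
  fixes K N L m :: nat and X :: "nat \<Rightarrow> nat set" and U :: "nat \<Rightarrow> nat \<Rightarrow> nat set"
    and S :: "nat \<Rightarrow> nat set" and sv :: "nat \<Rightarrow> nat"
  assumes L: "L = 1 \<or> L = 2"
  and X: "\<And>i. i < L \<Longrightarrow> X i \<subseteq> {..<m}"
  and Usub: "\<And>k i. k \<in> {1..K} \<Longrightarrow> i < 2 \<Longrightarrow> U k i \<subseteq> {..<m}"
  and Ust: "\<And>k i j. k \<in> {1..K} \<Longrightarrow> i < 2 \<Longrightarrow> j \<in> U k i \<Longrightarrow> k \<in> S (sv j)"
  and par: "\<And>k i i'. k \<in> {1..K} \<Longrightarrow> i < L \<Longrightarrow> i' < L \<Longrightarrow> card (U k i' \<inter> X i) mod 2 = (if i' = i then 1 else 0)"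
  and sv: "\<And>j. j < m \<Longrightarrow> sv j \<in> {1..N}"
  and St: "\<And>n. n \<in> {1..N} \<Longrightarrow> S n \<subseteq> {1..K} \<and> card (S n) = 2"
  and K: "K \<ge> 1"
begin

definition "ZZ = Zf m X L"
definition "ZD = pmf_of_set (enc m ` ZZ)"
definition "ff n k w c = map (\<lambda>j. (zdec c j + del (U k) (w k) j) mod 2) (slots m sv n)"
definition "DD n = length (slots m sv n)"
definition "Ans a = map (\<lambda>n. map a (slots m sv n)) [1..<N+1]"

lemma ZZ_Vs: "ZZ \<subseteq> Vs m" unfolding ZZ_def Zf_def by auto
lemma finite_ZZ: "finite ZZ" using ZZ_Vs finite_Vs finite_subset by blast
lemma zero_ZZ: "(\<lambda>_. 0) \<in> ZZ" unfolding ZZ_def Zf_def using zero_Vs by auto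
lemma ZZ_ne: "ZZ \<noteq> {}" using zero_ZZ by auto

lemma del_out: "k \<in> {1..K} \<Longrightarrow> j \<ge> m \<Longrightarrow> del (U k) v j = 0"
  using Usub[of k 0] Usub[of k 1] unfolding del_def ind_def by auto

lemma xadd_Vs: "k \<in> {1..K} \<Longrightarrow> z \<in> Vs m \<Longrightarrow> xadd (U k) v z \<in> Vs m"
  unfolding Vs_iff xadd_def using del_out by auto

lemma finX: "i < L \<Longrightarrow> finite (X i)" using X finite_subset by blast

lemma dec_xadd:
  assumes k: "k \<in> {1..K}" and v: "v \<in> Vs L" and z: "\<forall>i<L. (\<Sum>j\<in>X i. z j) mod 2 = 0"
  shows "dec X L (xadd (U k) v z) = ((\<lambda>i. if i < L then ((\<Sum>j\<in>X i. z j) + v i) mod 2 else 0))"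
proof
  fix i show "dec X L (xadd (U k) v z) i = (if i < L then ((\<Sum>j\<in>X i. z j) + v i) mod 2 else 0)"
  proof (cases "i < L")
    case True
    then show ?thesis unfolding dec_def xadd_def
      using lin[where X=X and i=i and U="U k" and z=z, OF L v True finX[OF True]] par[OF k True] by auto
  qed (simp add: dec_def)
qed

lemma dec_xadd_ZZ:
  assumes k: "k \<in> {1..K}" and v: "v \<in> Vs L" and z: "z \<in> ZZ"
  shows "dec X L (xadd (U k) v z) = v"
proof -
  have zc: "\<forall>i<L. (\<Sum>j\<in>X i. z j) mod 2 = 0" using z unfolding ZZ_def Zf_def by auto
  show ?thesis unfolding dec_xadd[OF k v zc]
  proof
    fix i show "(if i < L then ((\<Sum>j\<in>X i. z j) + v i) mod 2 else 0) = v i"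
      using v zc unfolding Vs_iff by (metis mod_add_left_eq add_0 mod_less)
  qed
qed

lemma dec_Vs: "dec X L a \<in> Vs L" unfolding dec_def Vs_iff by auto

lemma xadd_twice: "a \<in> Vs m \<Longrightarrow> xadd (U k) v (xadd (U k) v a) = a"
  unfolding xadd_def Vs_iff
proof
  fix j assume a: "\<forall>i. if i < m then a i < 2 else a i = 0"
  have "a j < 2" using a by (metis zero_less_numeral)
  then show "((a j + del (U k) v j) mod 2 + del (U k) v j) mod 2 = a j"
    by (metis mod_add_left_eq add.assoc mod_add_self2 mult_2 mod_mult_self2 mod_less nat_mult_1 mult.commute)
qed

lemma xadd_inj:
  assumes k: "k \<in> {1..K}"
  shows "inj_on (\<lambda>(v, z). xadd (U k) v z) (Vs L \<times> ZZ)"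
proof (rule inj_onI, clarify)
  fix v z v' z' assume v: "v \<in> Vs L" and z: "z \<in> ZZ" and v': "v' \<in> Vs L" and z': "z' \<in> ZZ"
    and eq: "xadd (U k) v z = xadd (U k) v' z'"
  have "v = v'" using dec_xadd_ZZ[OF k v z] dec_xadd_ZZ[OF k v' z'] eq by simp
  moreover have "z = z'" using xadd_twice[of z k v] xadd_twice[of z' k v'] eq \<open>v = v'\<close> z z' ZZ_Vs by auto
  ultimately show "v = v' \<and> z = z'" by simp
qed

lemma xadd_img:
  assumes k: "k \<in> {1..K}"
  shows "(\<lambda>(v, z). xadd (U k) v z) ` (Vs L \<times> ZZ) = Vs m"
proof
  show "(\<lambda>(v, z). xadd (U k) v z) ` (Vs L \<times> ZZ) \<subseteq> Vs m"
    using xadd_Vs[OF k] ZZ_Vs by auto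
next
  show "Vs m \<subseteq> (\<lambda>(v, z). xadd (U k) v z) ` (Vs L \<times> ZZ)"
  proof
    fix a assume a: "a \<in> Vs m"
    define v where "v = dec X L a"
    define z where "z = xadd (U k) v a"
    have v: "v \<in> Vs L" unfolding v_def by (rule dec_Vs)
    have za: "z \<in> Vs m" unfolding z_def by (rule xadd_Vs[OF k a])
    have ac: "\<forall>i<L. (\<Sum>j\<in>X i. a j) mod 2 = v i" unfolding v_def dec_def by auto
    have "\<forall>i<L. (\<Sum>j\<in>X i. z j) mod 2 = 0"
    proof (intro allI impI)
      fix i assume i: "i < L"
      have "(\<Sum>j\<in>X i. z j) mod 2 = ((\<Sum>j\<in>X i. a j) + v i) mod 2"
        unfolding z_def xadd_def
        using lin[where X=X and i=i and U="U k" and z=a, OF L v i finX[OF i]] par[OF k i] by auto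
      also have "\<dots> = (v i + v i) mod 2" using ac i by (metis mod_add_left_eq)
      finally show "(\<Sum>j\<in>X i. z j) mod 2 = 0" by simp
    qed
    then have z: "z \<in> ZZ" unfolding ZZ_def Zf_def using za by auto
    have "xadd (U k) v z = a" unfolding z_def by (rule xadd_twice[OF a])
    then show "a \<in> (\<lambda>(v, z). xadd (U k) v z) ` (Vs L \<times> ZZ)" using v z by force
  qed
qed

lemma ff_enc:
  assumes z: "z \<in> ZZ"
  shows "pid_answers N ff k w (enc m z) = Ans (xadd (U k) (w k) z)"
  unfolding pid_answers_def Ans_def ff_def xadd_def using zdec_enc z ZZ_Vs by auto

lemma Ans_inj:
  assumes a: "a \<in> Vs m" and b: "b \<in> Vs m" and eq: "Ans a = Ans b"
  shows "a = b"
proof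
  fix j show "a j = b j"
  proof (cases "j < m")
    case True
    have n: "sv j \<in> set [1..<N+1]" using sv[OF True] by auto
    have "\<forall>n\<in>set [1..<N+1]. map a (slots m sv n) = map b (slots m sv n)"
      using eq unfolding Ans_def map_eq_conv by simp
    then have "map a (slots m sv (sv j)) = map b (slots m sv (sv j))" using n by blast
    moreover have "j \<in> set (slots m sv (sv j))" unfolding slots_def using True by auto
    ultimately show ?thesis by (simp add: map_eq_conv)
  next
    case False then show ?thesis using a b unfolding Vs_iff by metis
  qed
qed

lemma ZD_eq: "ZD = map_pmf (enc m) (pmf_of_set ZZ)"
  unfolding ZD_def
  by (rule map_pmf_of_set_inj[symmetric]) (auto intro: inj_on_subset[OF inj_enc ZZ_Vs] simp: ZZ_ne finite_ZZ)

lemma set_ZD: "set_pmf ZD = enc m ` ZZ"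
  unfolding ZD_def using finite_ZZ ZZ_ne by simp

lemma privacy_k:
  assumes k: "k \<in> {1..K}"
  shows "map_pmf (\<lambda>(w, z). (pid_answers N ff k w z, w k)) (pair_pmf (pmf_of_set (pid_msgs K L 2)) ZD)
       = map_pmf (\<lambda>a. (Ans a, dec X L a)) (pmf_of_set (Vs m))"
proof -
  have neV: "Vs L \<noteq> {}" using zero_Vs by auto
  have "pair_pmf (pmf_of_set (pid_msgs K L 2)) ZD =
        pair_pmf (pmf_of_set (pid_msgs K L 2)) (map_pmf (enc m) (pmf_of_set ZZ))" using ZD_eq by simp
  also have "\<dots> = map_pmf (\<lambda>(w, z). (w, enc m z)) (pair_pmf (pmf_of_set (pid_msgs K L 2)) (pmf_of_set ZZ))"
    using map_pair[of id "enc m" "pmf_of_set (pid_msgs K L 2)" "pmf_of_set ZZ"] by (simp add: pmf.map_id)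
  finally have e1: "map_pmf (\<lambda>(w, z). (pid_answers N ff k w z, w k)) (pair_pmf (pmf_of_set (pid_msgs K L 2)) ZD)
     = map_pmf (\<lambda>(w, z). (pid_answers N ff k w (enc m z), w k)) (pair_pmf (pmf_of_set (pid_msgs K L 2)) (pmf_of_set ZZ))"
    by (simp add: pmf.map_comp o_def split_def)
  also have "\<dots> = map_pmf (\<lambda>(w, z). (Ans (xadd (U k) (w k) z), w k)) (pair_pmf (pmf_of_set (pid_msgs K L 2)) (pmf_of_set ZZ))"
    by (rule map_pmf_cong[OF refl]) (clarsimp simp: set_pair_pmf finite_ZZ ZZ_ne ff_enc)
  also have "\<dots> = map_pmf (\<lambda>(v, z). (Ans (xadd (U k) v z), v)) (map_pmf (\<lambda>(w, z). (w k, z)) (pair_pmf (pmf_of_set (pid_msgs K L 2)) (pmf_of_set ZZ)))"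
    by (simp add: pmf.map_comp o_def split_def)
  also have "map_pmf (\<lambda>(w, z). (w k, z)) (pair_pmf (pmf_of_set (pid_msgs K L 2)) (pmf_of_set ZZ))
      = pair_pmf (pmf_of_set (Vs L)) (pmf_of_set ZZ)"
    using map_pair[of "\<lambda>w. w k" id "pmf_of_set (pid_msgs K L 2)" "pmf_of_set ZZ"] msgs_proj[OF k]
    by (simp add: pmf.map_id)
  also have "\<dots> = pmf_of_set (Vs L \<times> ZZ)"
    by (rule pair_pmf_of_set) (auto simp: finite_Vs neV finite_ZZ ZZ_ne)
  also have "map_pmf (\<lambda>(v, z). (Ans (xadd (U k) v z), v)) (pmf_of_set (Vs L \<times> ZZ))
      = map_pmf (\<lambda>a. (Ans a, dec X L a)) (map_pmf (\<lambda>(v, z). xadd (U k) v z) (pmf_of_set (Vs L \<times> ZZ)))"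
    unfolding pmf.map_comp
    by (rule map_pmf_cong[OF refl]) (clarsimp simp: set_pair_pmf dec_xadd_ZZ[OF k] finite_Vs neV finite_ZZ ZZ_ne)
  also have "map_pmf (\<lambda>(v, z). xadd (U k) v z) (pmf_of_set (Vs L \<times> ZZ)) = pmf_of_set (Vs m)"
    using map_pmf_of_set_inj[OF xadd_inj[OF k]] xadd_img[OF k] by (simp add: finite_Vs neV finite_ZZ ZZ_ne)
  finally show ?thesis .
qed

lemma scheme: "pid_scheme K N 2 2 L S ZD ff DD"
  unfolding pid_scheme_def
proof (intro conjI ballI allI impI)
  show "prime (2::nat)" by simp
  show "1 \<le> L" using L by auto
  fix n assume "n \<in> {1..N}" then show "S n \<subseteq> {1..K}" "card (S n) = 2" using St by auto
next
  fix n k w w' z assume n: "n \<in> {1..N}" and k: "k \<in> {1..K}" and "w \<in> pid_msgs K L 2" "w' \<in> pid_msgs K L 2"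
    and agree: "\<forall>j\<in>S n. w j = w' j"
  show "ff n k w z = ff n k w' z"
  proof (cases "k \<in> S n")
    case True then show ?thesis using agree unfolding ff_def by simp
  next
    case False
    have "\<And>j. j \<in> set (slots m sv n) \<Longrightarrow> del (U k) (w k) j = 0 \<and> del (U k) (w' k) j = 0"
    proof -
      fix j assume "j \<in> set (slots m sv n)"
      then have "sv j = n" unfolding slots_def by simp
      then have "j \<notin> U k 0" "j \<notin> U k 1" using Ust[OF k, of 0 j] Ust[OF k, of 1 j] False by auto
      then show "del (U k) (w k) j = 0 \<and> del (U k) (w' k) j = 0" unfolding del_def ind_def by simp
    qed
    then show ?thesis unfolding ff_def by simp
  qed
next
  fix n k w z assume n: "n \<in> {1..N}" and k: "k \<in> {1..K}" and "w \<in> pid_msgs K L 2" and "z \<in> set_pmf ZD"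
  show "length (ff n k w z) = DD n" unfolding ff_def DD_def by simp
  show "set (ff n k w z) \<subseteq> {..<2}" unfolding ff_def by auto
next
  fix k w w' z z' assume k: "k \<in> {1..K}" and w: "w \<in> pid_msgs K L 2" and w': "w' \<in> pid_msgs K L 2"
    and z: "z \<in> set_pmf ZD" and z': "z' \<in> set_pmf ZD" and eq: "pid_answers N ff k w z = pid_answers N ff k w' z'"
  obtain y where y: "y \<in> ZZ" "z = enc m y" using z set_ZD by auto
  obtain y' where y': "y' \<in> ZZ" "z' = enc m y'" using z' set_ZD by auto
  have wk: "w k \<in> Vs L" "w' k \<in> Vs L" using w w' k unfolding msgs_PiE PiE_dflt_def by auto
  have "Ans (xadd (U k) (w k) y) = Ans (xadd (U k) (w' k) y')" using eq ff_enc y y' by simp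
  then have "xadd (U k) (w k) y = xadd (U k) (w' k) y'"
    using Ans_inj xadd_Vs[OF k] y y' ZZ_Vs by blast
  then show "w k = w' k" using dec_xadd_ZZ[OF k wk(1) y(1)] dec_xadd_ZZ[OF k wk(2) y'(1)] by metis
next
  fix k assume k: "k \<in> {1..K}"
  have "1 \<in> {1..K}" using K by auto
  then show "map_pmf (\<lambda>(w, z). (pid_answers N ff k w z, w k)) (pair_pmf (pmf_of_set (pid_msgs K L 2)) ZD) =
    map_pmf (\<lambda>(w, z). (pid_answers N ff 1 w z, w 1)) (pair_pmf (pmf_of_set (pid_msgs K L 2)) ZD)"
    using privacy_k[OF k] privacy_k by simp
qed

lemma sum_DD: "(\<Sum>n\<in>{1..N}. DD n) = m"
proof -
  have "(\<Sum>n\<in>{1..N}. DD n) = (\<Sum>n\<in>{1..N}. card {j\<in>{..<m}. sv j = n})"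
    unfolding DD_def slots_def by (intro sum.cong refl) (simp add: distinct_length_filter Int_def conj_commute)
  also have "\<dots> = card (\<Union>n\<in>{1..N}. {j\<in>{..<m}. sv j = n})"
    by (rule card_UN_disjoint[symmetric]) auto
  also have "(\<Union>n\<in>{1..N}. {j\<in>{..<m}. sv j = n}) = {..<m}" using sv by auto
  finally show ?thesis by simp
qed

end




lemma key_bound:
  assumes sch: "pid_scheme K N M p L S Zd f D" and k: "k \<in> {1..K}"
  shows "L \<le> (\<Sum>n\<in>{n\<in>{1..N}. k \<in> S n}. D n)"
proof -
  define T where "T = {n\<in>{1..N}. k \<in> S n}"
  define Ms where "Ms = pid_msgs K L p"
  from sch have pr: "prime p" and dep: "\<forall>n\<in>{1..N}. \<forall>k\<in>{1..K}. \<forall>w\<in>Ms. \<forall>w'\<in>Ms. \<forall>z.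
         (\<forall>j\<in>S n. w j = w' j) \<longrightarrow> f n k w z = f n k w' z"
    and len: "\<forall>n\<in>{1..N}. \<forall>k\<in>{1..K}. \<forall>w\<in>Ms. \<forall>z\<in>set_pmf Zd.
         length (f n k w z) = D n \<and> set (f n k w z) \<subseteq> {..<p}"
    and cor: "\<forall>k\<in>{1..K}. \<forall>w\<in>Ms. \<forall>w'\<in>Ms.
         \<forall>z\<in>set_pmf Zd. \<forall>z'\<in>set_pmf Zd.
         pid_answers N f k w z = pid_answers N f k w' z' \<longrightarrow> w k = w' k"
    unfolding pid_scheme_def Ms_def by blast+
  have p2: "p \<ge> 2" using pr prime_ge_2_nat by blast
  obtain z where z: "z \<in> set_pmf Zd" using set_pmf_not_empty by fast
  define LL where "LL = {xs. set xs \<subseteq> {..<p} \<and> length xs = L}"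
  define \<phi> where "\<phi> xs = (\<lambda>j::nat. if j = k then (\<lambda>i. if i < L then xs ! i else 0) else (\<lambda>i::nat. 0::nat))" for xs :: "nat list"
  define PP where "PP = (\<Pi>\<^sub>E n\<in>T. {xs. set xs \<subseteq> {..<p} \<and> length xs = D n})"
  define \<psi> where "\<psi> w = restrict (\<lambda>n. f n k w z) T" for w
  have phiM: "\<phi> xs \<in> Ms" if "xs \<in> LL" for xs
    using that k p2 unfolding Ms_def pid_msgs_def \<phi>_def LL_def by (auto simp: subset_iff)
  have inj: "inj_on (\<psi> \<circ> \<phi>) LL"
  proof (rule inj_onI)
    fix xs ys assume xs: "xs \<in> LL" and ys: "ys \<in> LL" and eq: "(\<psi> \<circ> \<phi>) xs = (\<psi> \<circ> \<phi>) ys"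
    have "pid_answers N f k (\<phi> xs) z = pid_answers N f k (\<phi> ys) z"
      unfolding pid_answers_def
    proof (rule map_cong[OF refl])
      fix n assume n: "n \<in> set [1..<N+1]"
      show "f n k (\<phi> xs) z = f n k (\<phi> ys) z"
      proof (cases "n \<in> T")
        case True
        then show ?thesis using eq unfolding \<psi>_def by (metis comp_apply restrict_apply')
      next
        case False
        then have "k \<notin> S n" using n unfolding T_def by auto
        then have "\<forall>j\<in>S n. \<phi> xs j = \<phi> ys j" unfolding \<phi>_def by auto
        moreover have "n \<in> {1..N}" using n by auto
        ultimately show ?thesis using dep k phiM[OF xs] phiM[OF ys] by blast
      qed
    qed
    then have "\<phi> xs k = \<phi> ys k" using cor[rule_format, OF k phiM[OF xs] phiM[OF ys] z z] by blast
    then have "\<forall>i<L. xs ! i = ys ! i" unfolding \<phi>_def by (simp add: fun_eq_iff) (metis)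
    then show "xs = ys" using xs ys unfolding LL_def by (auto intro: nth_equalityI)
  qed
  have img: "(\<psi> \<circ> \<phi>) ` LL \<subseteq> PP"
  proof
    fix y assume "y \<in> (\<psi> \<circ> \<phi>) ` LL"
    then obtain xs where xs: "xs \<in> LL" and y: "y = \<psi> (\<phi> xs)" by auto
    show "y \<in> PP" unfolding y PP_def \<psi>_def
      using len phiM[OF xs] k z unfolding T_def by auto
  qed
  have finT: "finite T" unfolding T_def by auto
  have finPP: "finite PP" unfolding PP_def using finT
    by (intro finite_PiE) (auto intro: finite_lists_length_eq)
  have "card LL \<le> card PP" using card_inj_on_le[OF inj img finPP] .
  moreover have "card LL = p ^ L" unfolding LL_def using card_lists_length_eq[of "{..<p}" L] by simp
  moreover have "card PP = p ^ (\<Sum>n\<in>T. D n)" unfolding PP_def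
    using finT by (simp add: card_PiE card_lists_length_eq power_sum)
  ultimately have "p ^ L \<le> p ^ (\<Sum>n\<in>T. D n)" by simp
  then show ?thesis unfolding T_def[symmetric] using p2 by (simp add: power_le_imp_le_exp)
qed

lemma double_count:
  fixes g :: "nat \<Rightarrow> nat"
  assumes "finite A" "finite B"
  shows "(\<Sum>k\<in>A. \<Sum>n\<in>{n\<in>B. k \<in> S n}. g n) = (\<Sum>n\<in>B. card (S n \<inter> A) * g n)"
proof -
  have "(\<Sum>k\<in>A. \<Sum>n\<in>{n\<in>B. k \<in> S n}. g n) = (\<Sum>k\<in>A. \<Sum>n\<in>B. if k \<in> S n then g n else 0)"
    using assms by (simp add: sum.inter_filter)
  also have "\<dots> = (\<Sum>n\<in>B. \<Sum>k\<in>A. if k \<in> S n then g n else 0)" by (rule sum.swap)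
  also have "\<dots> = (\<Sum>n\<in>B. card (S n \<inter> A) * g n)"
  proof (rule sum.cong[OF refl])
    fix n assume "n \<in> B"
    have "(\<Sum>k\<in>A. if k \<in> S n then g n else 0) = (\<Sum>k\<in>{k\<in>A. k \<in> S n}. g n)"
      by (simp only: sum.inter_filter[OF assms(1)])
    also have "\<dots> = card {k\<in>A. k \<in> S n} * g n" by simp
    also have "{k\<in>A. k \<in> S n} = S n \<inter> A" by auto
    finally show "(\<Sum>k\<in>A. if k \<in> S n then g n else 0) = card (S n \<inter> A) * g n" .
  qed
  finally show ?thesis .
qed

lemma sch_basic:
  assumes "pid_scheme K N M p L S Zd f D"
  shows "L \<ge> 1" "\<And>n. n \<in> {1..N} \<Longrightarrow> S n \<subseteq> {1..K} \<and> card (S n) = M"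
  using assms unfolding pid_scheme_def by auto

lemma ub_general:
  assumes sch: "pid_scheme K N 2 p L S Zd f D"
  shows "K * L \<le> 2 * (\<Sum>n\<in>{1..N}. D n)"
proof -
  have "K * L = (\<Sum>k\<in>{1..K}. L)" by simp
  also have "\<dots> \<le> (\<Sum>k\<in>{1..K}. \<Sum>n\<in>{n\<in>{1..N}. k \<in> S n}. D n)"
    by (rule sum_mono) (rule key_bound[OF sch])
  also have "\<dots> = (\<Sum>n\<in>{1..N}. card (S n \<inter> {1..K}) * D n)" by (rule double_count) auto
  also have "\<dots> = (\<Sum>n\<in>{1..N}. 2 * D n)"
    by (rule sum.cong[OF refl]) (metis Int_absorb2 sch_basic(2)[OF sch])
  finally show ?thesis by (simp add: sum_distrib_left)
qed

lemma T_nonempty: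
  assumes sch: "pid_scheme K N M p L S Zd f D" and k: "k \<in> {1..K}"
  shows "{n\<in>{1..N}. k \<in> S n} \<noteq> {}"
proof
  assume "{n\<in>{1..N}. k \<in> S n} = {}"
  then have "(\<Sum>n\<in>{n\<in>{1..N}. k \<in> S n}. D n) = 0" by (simp only: sum.empty)
  then show False using key_bound[OF sch k] sch_basic(1)[OF sch] by linarith
qed

lemma ub_cover:
  assumes sch: "pid_scheme K N 2 p L S Zd f D"
  shows "K \<le> 2 * N"
proof -
  have "K = (\<Sum>k\<in>{1..K}. 1::nat)" by simp
  also have "\<dots> \<le> (\<Sum>k\<in>{1..K}. \<Sum>n\<in>{n\<in>{1..N}. k \<in> S n}. 1::nat)"
  proof (rule sum_mono)
    fix k assume "k \<in> {1..K}"
    from T_nonempty[OF sch this] show "1 \<le> (\<Sum>n\<in>{n\<in>{1..N}. k \<in> S n}. 1::nat)"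
      by (simp add: Suc_le_eq card_gt_0_iff)
  qed
  also have "\<dots> = (\<Sum>n\<in>{1..N}. card (S n \<inter> {1..K}) * 1)" by (rule double_count) auto
  also have "\<dots> = (\<Sum>n\<in>{1..N}. 2::nat)"
    by (rule sum.cong[OF refl]) (metis Int_absorb2 sch_basic(2)[OF sch] mult_1_right)
  finally show ?thesis by simp
qed

lemma ub_odd:
  assumes sch: "pid_scheme K N 2 p L S Zd f D" and KN: "K + 1 = 2 * N"
  shows "N * L \<le> (\<Sum>n\<in>{1..N}. D n)"
proof -
  define T where "T k = {n\<in>{1..N}. k \<in> S n}" for k
  have cnt: "(\<Sum>k\<in>{1..K}. card (T k)) = 2 * N"
  proof -
    have "(\<Sum>k\<in>{1..K}. card (T k)) = (\<Sum>k\<in>{1..K}. \<Sum>n\<in>{n\<in>{1..N}. k \<in> S n}. 1::nat)"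
      unfolding T_def by simp
    also have "\<dots> = (\<Sum>n\<in>{1..N}. card (S n \<inter> {1..K}) * 1)" by (rule double_count) auto
    also have "\<dots> = (\<Sum>n\<in>{1..N}. 2::nat)"
      by (rule sum.cong[OF refl]) (metis Int_absorb2 sch_basic(2)[OF sch] mult_1_right)
    finally show ?thesis by simp
  qed
  have Tpos: "card (T k) \<ge> 1" if "k \<in> {1..K}" for k
    using T_nonempty[OF sch that] unfolding T_def by (simp add: Suc_le_eq card_gt_0_iff)
  have each: "L \<le> D n" if n: "n \<in> {1..N}" for n
  proof -
    have Sn: "S n \<subseteq> {1..K}" "card (S n) = 2" using sch_basic(2)[OF sch n] by auto
    then obtain a b where ab: "S n = {a, b}" "a \<noteq> b" by (meson card_2_iff)
    have "\<exists>k\<in>S n. card (T k) \<le> 1"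
    proof (rule ccontr)
      assume "\<not> ?thesis"
      then have ga: "card (T a) \<ge> 2" and gb: "card (T b) \<ge> 2" using ab by auto
      have abK: "a \<in> {1..K}" "b \<in> {1..K}" using Sn ab by auto
      have e1: "(\<Sum>k\<in>{1..K}. card (T k)) = (\<Sum>k\<in>{1..K} - {a,b}. card (T k)) + (\<Sum>k\<in>{a,b}. card (T k))"
        using abK by (subst sum.subset_diff[of "{a,b}"]) auto
      have e2: "(\<Sum>k\<in>{a,b}. card (T k)) = card (T a) + card (T b)" using ab by simp
      have e3: "(\<Sum>k\<in>{1..K} - {a,b}. card (T k)) \<ge> (\<Sum>k\<in>{1..K} - {a,b}. 1)"
        by (intro sum_mono Tpos) auto
      have e4: "(\<Sum>k\<in>{1..K} - {a,b}. (1::nat)) = card ({1..K} - {a,b})" by simp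
      have "2 * N \<ge> card ({1..K} - {a,b}) + 4" using cnt ga gb e1 e2 e3 e4 by linarith
      moreover have "card ({1..K} - {a,b}) = K - 2" using abK ab by (simp add: card_Diff_subset)
      ultimately show False using KN abK by simp
    qed
    then obtain k where k: "k \<in> S n" "card (T k) \<le> 1" by blast
    have kK: "k \<in> {1..K}" using k Sn by auto
    have "n \<in> T k" using n k unfolding T_def by auto
    moreover have "finite (T k)" unfolding T_def by simp
    ultimately have "T k = {n}" using k(2) card_le_Suc0_iff_eq[of "T k"] by auto
    then show ?thesis using key_bound[OF sch kK] unfolding T_def by simp
  qed
  have "N * L = (\<Sum>n\<in>{1..N}. L)" by simp
  also have "\<dots> \<le> (\<Sum>n\<in>{1..N}. D n)" by (rule sum_mono) (rule each)
  finally show ?thesis .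
qed




lemma rate_mem:
  assumes "xs K N L m X U S sv"
  shows "real L / real m \<in> pid_rates K N 2"
proof -
  interpret I: xs K N L m X U S sv by fact
  have "real L / real m = real L / real (sum I.DD {1..N})" using I.sum_DD by simp
  then show ?thesis unfolding pid_rates_def using I.scheme by blast
qed

lemma schemeA:
  assumes K: "K \<ge> 2" and N: "(K+1) div 2 \<le> N"
  shows "1 / real ((K+1) div 2) \<in> pid_rates K N 2"
proof -
  define m where "m = (K+1) div 2"
  define X :: "nat \<Rightarrow> nat set" where "X i = {..<m}" for i
  define U :: "nat \<Rightarrow> nat \<Rightarrow> nat set" where "U k i = (if i = 0 then {(k+1) div 2 - 1} else {})" for k i
  define S :: "nat \<Rightarrow> nat set" where "S n = (if 2*n \<le> K then {2*n-1, 2*n} else {K-1, K})" for n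
  define sv :: "nat \<Rightarrow> nat" where "sv j = j + 1" for j
  have "xs K N 1 m X U S sv"
  proof
    show "(1::nat) = 1 \<or> (1::nat) = 2" by simp
    show "\<And>i. i < 1 \<Longrightarrow> X i \<subseteq> {..<m}" unfolding X_def by simp
    show "\<And>k i. k \<in> {1..K} \<Longrightarrow> i < 2 \<Longrightarrow> U k i \<subseteq> {..<m}"
      unfolding U_def m_def by auto
    show "\<And>k i j. k \<in> {1..K} \<Longrightarrow> i < 2 \<Longrightarrow> j \<in> U k i \<Longrightarrow> k \<in> S (sv j)"
    proof -
      fix k i j assume k: "k \<in> {1..K}" and "i < 2" and j: "j \<in> U k i"
      then have j': "j = (k+1) div 2 - 1" "i = 0" unfolding U_def by (auto split: if_splits)
      have "sv j = (k+1) div 2" unfolding sv_def j' using k by auto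
      then show "k \<in> S (sv j)" unfolding S_def using k by auto
    qed
    show "\<And>k i i'. k \<in> {1..K} \<Longrightarrow> i < 1 \<Longrightarrow> i' < 1 \<Longrightarrow> card (U k i' \<inter> X i) mod 2 = (if i' = i then 1 else 0)"
    proof -
      fix k i i' assume k: "k \<in> {1..K}" and "i < (1::nat)" "i' < (1::nat)"
      then have "i = 0" "i' = 0" by auto
      moreover have "(k+1) div 2 - 1 < m" unfolding m_def using k by auto
      ultimately show "card (U k i' \<inter> X i) mod 2 = (if i' = i then 1 else 0)"
        unfolding U_def X_def by auto
    qed
    show "\<And>j. j < m \<Longrightarrow> sv j \<in> {1..N}" unfolding sv_def m_def using N by auto
    show "\<And>n. n \<in> {1..N} \<Longrightarrow> S n \<subseteq> {1..K} \<and> card (S n) = 2"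
      unfolding S_def using K by auto
    show "K \<ge> 1" using K by simp
  qed
  from rate_mem[OF this] show ?thesis unfolding m_def by simp
qed





lemma schemeB:
  assumes K: "K \<ge> 3" "odd K" and N: "(K+3) div 2 \<le> N"
  shows "2 / real K \<in> pid_rates K N 2"
proof -
  define X :: "nat \<Rightarrow> nat set" where
    "X i = (if i = 0 then {0,2} \<union> {j. 3 \<le> j \<and> j < K \<and> odd j} else {1,2} \<union> {j. 3 \<le> j \<and> j < K \<and> even j})" for i
  define s0 :: "nat \<Rightarrow> nat" where "s0 k = 2 * ((k+4) div 2) - 5" for k
  define U :: "nat \<Rightarrow> nat \<Rightarrow> nat set" where
    "U k i = (if k = 1 then (if i = 0 then {0} else {0,2})
              else if k = 2 then (if i = 0 then {0} else {1})
              else if k = 3 then (if i = 0 then {1,2} else {1})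
              else (if i = 0 then {s0 k} else {s0 k + 1}))" for k i
  define S :: "nat \<Rightarrow> nat set" where
    "S n = (if n = 1 then {1,2} else if n = 2 then {2,3} else if n = 3 then {1,3}
            else if 4 \<le> n \<and> 2*n-3 \<le> K then {2*n-4, 2*n-3} else {1,2})" for n
  define sv :: "nat \<Rightarrow> nat" where "sv j = (if j < 3 then j+1 else (j+1) div 2 + 2)" for j
  have s0: "k \<ge> 4 \<Longrightarrow> k \<le> K \<Longrightarrow> 3 \<le> s0 k \<and> s0 k + 1 < K \<and> odd (s0 k)" for k
    unfolding s0_def using K by presburger
  have svs0: "k \<ge> 4 \<Longrightarrow> k \<le> K \<Longrightarrow> sv (s0 k) = (k+4) div 2 \<and> sv (s0 k + 1) = (k+4) div 2" for k
    unfolding s0_def sv_def by presburger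
  have "xs K N 2 K X U S sv"
  proof
    show "(2::nat) = 1 \<or> (2::nat) = 2" by simp
    show "\<And>i. i < 2 \<Longrightarrow> X i \<subseteq> {..<K}" unfolding X_def using K by auto
    show "\<And>k i. k \<in> {1..K} \<Longrightarrow> i < 2 \<Longrightarrow> U k i \<subseteq> {..<K}"
    proof -
      fix k i assume k: "k \<in> {1..K}" and "i < (2::nat)"
      show "U k i \<subseteq> {..<K}"
      proof (cases "k \<le> 3")
        case True then show ?thesis unfolding U_def using K k by auto
      next
        case False then show ?thesis unfolding U_def using s0[of k] k by auto
      qed
    qed
    show "\<And>k i j. k \<in> {1..K} \<Longrightarrow> i < 2 \<Longrightarrow> j \<in> U k i \<Longrightarrow> k \<in> S (sv j)"
    proof -
      fix k i j assume k: "k \<in> {1..K}" and "i < (2::nat)" and j: "j \<in> U k i"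
      show "k \<in> S (sv j)"
      proof (cases "k \<le> 3")
        case True
        then show ?thesis using k j unfolding U_def S_def sv_def by (auto split: if_splits)
      next
        case False
        then have j': "j = s0 k \<or> j = s0 k + 1" using j unfolding U_def by (auto split: if_splits)
        then have "sv j = (k+4) div 2" using svs0[of k] k False by auto
        moreover have "k \<in> S ((k+4) div 2)" unfolding S_def using False k K by auto presburger+
        ultimately show ?thesis by simp
      qed
    qed
    show "\<And>k i i'. k \<in> {1..K} \<Longrightarrow> i < 2 \<Longrightarrow> i' < 2 \<Longrightarrow> card (U k i' \<inter> X i) mod 2 = (if i' = i then 1 else 0)"
    proof -
      fix k i i' assume k: "k \<in> {1..K}" and i: "i < (2::nat)" and i': "i' < (2::nat)"
      show "card (U k i' \<inter> X i) mod 2 = (if i' = i then 1 else 0)"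
      proof (cases "k \<le> 3")
        case True
        then have "k = 1 \<or> k = 2 \<or> k = 3" using k by auto
        moreover have "i = 0 \<or> i = 1" "i' = 0 \<or> i' = 1" using i i' by auto
        ultimately show ?thesis unfolding U_def X_def using K by auto
      next
        case False
        then have s: "3 \<le> s0 k" "s0 k + 1 < K" "odd (s0 k)" using s0[of k] k by auto
        have "i = 0 \<or> i = 1" "i' = 0 \<or> i' = 1" using i i' by auto
        then show ?thesis unfolding U_def X_def using False s by auto
      qed
    qed
    show "\<And>j. j < K \<Longrightarrow> sv j \<in> {1..N}" unfolding sv_def using N K by auto presburger
    show "\<And>n. n \<in> {1..N} \<Longrightarrow> S n \<subseteq> {1..K} \<and> card (S n) = 2"
      unfolding S_def using K by auto
    show "K \<ge> 1" using K by simp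
  qed
  from rate_mem[OF this] show ?thesis by simp
qed




lemma ceil_half: "nat \<lceil>real K / 2\<rceil> = (K+1) div 2"
proof -
  have "\<lceil>real K / 2\<rceil> = int ((K+1) div 2)"
  proof (rule ceiling_unique)
    show "real_of_int (int ((K + 1) div 2)) - 1 < real K / 2"
      by (cases "even K") (auto elim!: evenE oddE simp: field_simps)
    show "real K / 2 \<le> real_of_int (int ((K + 1) div 2))"
      by (cases "even K") (auto elim!: evenE oddE simp: field_simps)
  qed
  then show ?thesis by simp
qed

lemma rate_ub:
  assumes r: "r \<in> pid_rates K N 2" and K: "K \<ge> 2"
  shows "r \<le> 2 / real K" and "K + 1 = 2 * N \<Longrightarrow> r \<le> 1 / real N"
proof -
  obtain p L S Zd f D where sch: "pid_scheme K N 2 p L S Zd f D" and rr: "r = real L / real (\<Sum>n\<in>{1..N}. D n)"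
    using r unfolding pid_rates_def by blast
  define s where "s = (\<Sum>n\<in>{1..N}. D n)"
  have ub: "K * L \<le> 2 * s" unfolding s_def by (rule ub_general[OF sch])
  have L1: "L \<ge> 1" using sch_basic(1)[OF sch] .
  have spos: "s > 0" using ub L1 K by (metis mult_is_0 neq0_conv le_zero_eq not_one_le_zero zero_less_iff_neq_zero mult_eq_0_iff le_0_eq numeral_2_eq_2 nat.simps(3) Suc_le_eq less_le_trans zero_less_numeral)
  have "real K * real L \<le> 2 * real s" using ub by (metis of_nat_le_iff of_nat_mult of_nat_numeral)
  then show "r \<le> 2 / real K" unfolding rr s_def[symmetric] using spos K by (simp add: field_simps)
  assume KN: "K + 1 = 2 * N"
  have "N * L \<le> s" unfolding s_def by (rule ub_odd[OF sch KN])
  then have "real N * real L \<le> real s" by (metis of_nat_le_iff of_nat_mult)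
  moreover have "N > 0" using KN K by simp
  ultimately show "r \<le> 1 / real N" unfolding rr s_def[symmetric] using spos by (simp add: field_simps)
qed

theorem corollary2:
  fixes K N :: nat
  assumes "K \<ge> 2"
  shows "pid_capacity K N 2 =
    (if N \<ge> nat \<lceil>real K / 2\<rceil> + 1 then 2 / real K
     else if N = nat \<lceil>real K / 2\<rceil> then 1 / real (nat \<lceil>real K / 2\<rceil>)
     else 0)"
proof -
  define c where "c = (K+1) div 2"
  have cc: "nat \<lceil>real K / 2\<rceil> = c" unfolding c_def by (rule ceil_half)
  have K: "K \<ge> 2" by fact
  have main: "pid_capacity K N 2 = (if N \<ge> c + 1 then 2 / real K else if N = c then 1 / real c else 0)"
  proof (cases "N \<ge> c + 1")
    case True
    have mem: "2 / real K \<in> pid_rates K N 2"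
    proof (cases "even K")
      case True
      then have "1 / real c = 2 / real K" unfolding c_def by (auto elim!: evenE)
      then show ?thesis using schemeA[OF K] \<open>N \<ge> c + 1\<close> unfolding c_def by force
    next
      case False
      then have "K \<ge> 3" using K by presburger
      moreover have "(K+3) div 2 \<le> N" using \<open>N \<ge> c + 1\<close> False unfolding c_def by presburger
      ultimately show ?thesis using schemeB False by blast
    qed
    have "Sup (pid_rates K N 2) = 2 / real K"
      by (rule cSup_eq_maximum[OF mem]) (rule rate_ub(1)[OF _ K])
    then show ?thesis unfolding pid_capacity_def using True mem by auto
  next
    case False
    show ?thesis
    proof (cases "N = c")
      case True
      have mem: "1 / real c \<in> pid_rates K N 2" using schemeA[OF K] True unfolding c_def by simp
      have "x \<le> 1 / real c" if x: "x \<in> pid_rates K N 2" for x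
      proof (cases "even K")
        case True
        then have "1 / real c = 2 / real K" unfolding c_def by (auto elim!: evenE)
        then show ?thesis using rate_ub(1)[OF x K] by simp
      next
        case False
        then have "K + 1 = 2 * N" using \<open>N = c\<close> unfolding c_def by presburger
        then show ?thesis using rate_ub(2)[OF x K] \<open>N = c\<close> by simp
      qed
      then have "Sup (pid_rates K N 2) = 1 / real c" by (rule cSup_eq_maximum[OF mem])
      then show ?thesis unfolding pid_capacity_def using True mem False by auto
    next
      case False2: False
      have "pid_rates K N 2 = {}"
      proof (rule ccontr)
        assume "pid_rates K N 2 \<noteq> {}"
        then obtain r where "r \<in> pid_rates K N 2" by blast
        then obtain p L S Zd f D where sch: "pid_scheme K N 2 p L S Zd f D"
          unfolding pid_rates_def by blast
        have "K \<le> 2 * N" by (rule ub_cover[OF sch])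
        moreover have "N < c" using False False2 by simp
        ultimately show False unfolding c_def by presburger
      qed
      then show ?thesis unfolding pid_capacity_def using False False2 by simp
    qed
  qed
  then show ?thesis using cc by simp
qed


end
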